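(* Let $k \geq 1$ and let $X \subset S^{\mathbb{Z}^2}$ be a two-dimensional subshift whose language $\mathcal{B}(X)$ (the set of finite patterns occurring in points of $X$) is a $\Pi^0_k$ set. Then the set of finite patterns $P$ with $P \sqsubset X^{(1)}$ is a $\Pi^0_{k+2}$ set.
   Context: A pattern is a pair $(D,s)$ with $D \subset \mathbb{Z}^2$ finite and $s: D \to S$; it occurs in a configuration $x$ if $x$ restricted to $D + \vec n$ equals $P$ (after translation) for some $\vec n$, and $P \sqsubset X$ means it occurs in some point of $X$. A subshift is a closed shift-invariant subset of $S^{\mathbb{Z}^2}$. $X^{(1)}$ is the set of non-isolated points of $X$ (itself a subshift). Sets of patterns are classified in the arithmetical hierarchy via a natural computable bijection with $\mathbb{N}$; $\Pi^0_n$ sets are those definable by formulas with $n$ alternating unbounded quantifier blocks starting with $\forall$ in front of a bounded-quantifier formula. *)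

theory Defs
  imports "HOL-Analysis.Analysis" "HOL-Library.Nat_Bijection"
begin

text \<open>The space (int * int => nat) carries the
library's product topology (nat is discrete), so S^(Z^2) is a closed subspace.\<close>

type_synonym config = "int \<times> int \<Rightarrow> nat"

definition shift :: "int \<times> int \<Rightarrow> config \<Rightarrow> config" where
  "shift v x = (\<lambda>p. x (fst p + fst v, snd p + snd v))"

definition subshift :: "nat set \<Rightarrow> config set \<Rightarrow> bool" where
  "subshift S X \<longleftrightarrow> finite S \<and> X \<subseteq> {x. \<forall>p. x p \<in> S} \<and> closed X
     \<and> (\<forall>x\<in>X. \<forall>v. shift v x \<in> X)"

definition derived :: "config set \<Rightarrow> config set" where
  "derived X = {x \<in> X. x islimpt X}"

text \<open>A pattern (D,s) is a finitely supported partial map: D = dom P, s = the o P.\<close>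
type_synonym pattern = "int \<times> int \<Rightarrow> nat option"

definition is_pattern :: "pattern \<Rightarrow> bool" where
  "is_pattern P \<longleftrightarrow> finite (dom P)"

definition occurs_in :: "pattern \<Rightarrow> config \<Rightarrow> bool" where
  "occurs_in P x \<longleftrightarrow> (\<exists>v. \<forall>p \<in> dom P. P p = Some (x (fst p + fst v, snd p + snd v)))"

definition occurs_in_shift :: "pattern \<Rightarrow> config set \<Rightarrow> bool" where
  "occurs_in_shift P X \<longleftrightarrow> (\<exists>x\<in>X. occurs_in P x)"

definition language :: "config set \<Rightarrow> pattern set" where
  "language X = {P. is_pattern P \<and> occurs_in_shift P X}"

text \<open>A natural number n codes the list list_decode n; each entry e codes a triple
(i,j,c) via prod_decode/int_decode; the pattern is the finite map assigning c to (i,j)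
(first occurrence wins). This is a computable surjection onto all finite patterns.\<close>

definition decode_entry :: "nat \<Rightarrow> (int \<times> int) \<times> nat" where
  "decode_entry e = (let (a, r) = prod_decode e; (b, c) = prod_decode r
                     in ((int_decode a, int_decode b), c))"

definition pattern_of_code :: "nat \<Rightarrow> pattern" where
  "pattern_of_code n = map_of (map decode_entry (list_decode n))"

inductive PR :: "nat \<Rightarrow> (nat list \<Rightarrow> nat) \<Rightarrow> bool" where
  zero: "PR n (\<lambda>_. 0)"
| succ: "PR 1 (\<lambda>xs. Suc (hd xs))"
| proj: "i < n \<Longrightarrow> PR n (\<lambda>xs. xs ! i)"
| comp: "PR m f \<Longrightarrow> length gs = m \<Longrightarrow> (\<forall>g\<in>set gs. PR n g)
         \<Longrightarrow> PR n (\<lambda>xs. f (map (\<lambda>g. g xs) gs))"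
| prim_rec: "PR n f \<Longrightarrow> PR (Suc (Suc n)) g
         \<Longrightarrow> PR (Suc n) (\<lambda>xs. rec_nat (f (tl xs)) (\<lambda>y r. g (y # r # tl xs)) (hd xs))"

fun alt_quant :: "bool \<Rightarrow> nat \<Rightarrow> (nat list \<Rightarrow> bool) \<Rightarrow> nat list \<Rightarrow> bool" where
  "alt_quant _ 0 R ys = R ys"
| "alt_quant True (Suc k) R ys = (\<forall>y. alt_quant False k R (ys @ [y]))"
| "alt_quant False (Suc k) R ys = (\<exists>y. alt_quant True k R (ys @ [y]))"

text \<open>Pi^0_k sets of naturals (Kleene normal form, primitive recursive matrix).\<close>
definition Pi0 :: "nat \<Rightarrow> nat set \<Rightarrow> bool" where
  "Pi0 k A \<longleftrightarrow> (\<exists>f. PR (Suc k) f \<and> (\<forall>x. x \<in> A \<longleftrightarrow> alt_quant True k (\<lambda>ys. f ys \<noteq> 0) [x]))"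

definition Pi0_patterns :: "nat \<Rightarrow> pattern set \<Rightarrow> bool" where
  "Pi0_patterns k A \<longleftrightarrow> Pi0 k {n. pattern_of_code n \<in> A}"

end

theory Submission
  imports Defs
begin


lemma tendsto_config_iff:
  "((f :: 'b \<Rightarrow> config) \<longlongrightarrow> l) F \<longleftrightarrow> (\<forall>p. eventually (\<lambda>a. f a p = l p) F)"
proof -
  have "((f :: 'b \<Rightarrow> config) \<longlongrightarrow> l) F \<longleftrightarrow> limitin (product_topology (\<lambda>i. euclidean) UNIV) f l F"
    by (simp add: euclidean_product_topology)
  also have "\<dots> \<longleftrightarrow> (\<forall>p. ((\<lambda>a. f a p) \<longlongrightarrow> l p) F)"
    by (subst limitin_componentwise) simp
  also have "\<dots> \<longleftrightarrow> (\<forall>p. eventually (\<lambda>a. f a p = l p) F)"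
    by (simp add: tendsto_discrete)
  finally show ?thesis .
qed

lemma cyl_open: "finite F \<Longrightarrow> open {y::config. \<forall>p\<in>F. y p = x p}"
  using product_topology_basis'[of F "\<lambda>p. {x p}" "\<lambda>p. p"] by (simp add: open_discrete)

lemma subshift_seq_compact:
  assumes "subshift S X" shows "seq_compact X"
proof -
  have fin: "finite S" and sub: "X \<subseteq> {x. \<forall>p. x p \<in> S}" and cl: "closed X"
    using assms unfolding subshift_def by auto
  have "compactin (product_topology (\<lambda>i. euclidean) UNIV) (PiE UNIV (\<lambda>_::int\<times>int. S))"
    using fin by (simp add: compactin_PiE finite_imp_compact)
  hence "compact (PiE UNIV (\<lambda>_::int\<times>int. S))"
    by (simp add: euclidean_product_topology)
  moreover have "PiE UNIV (\<lambda>_::int\<times>int. S) = {x. \<forall>p. x p \<in> S}"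
    by (auto simp: PiE_def Pi_def)
  ultimately have "compact {x::config. \<forall>p. x p \<in> S}" by simp
  hence "compact X" using cl sub
    by (metis compact_Int_closed inf.absorb_iff2)
  thus ?thesis by (rule compact_imp_seq_compact)
qed



definition PRf :: "nat \<Rightarrow> (nat list \<Rightarrow> nat) \<Rightarrow> bool" where
  "PRf n g \<longleftrightarrow> (\<exists>f. PR n f \<and> (\<forall>xs. length xs = n \<longrightarrow> f xs = g xs))"

lemma PR_PRf: "PR n f \<Longrightarrow> PRf n f"
  unfolding PRf_def by blast

lemma PRf_cong: "PRf n f \<Longrightarrow> (\<And>xs. length xs = n \<Longrightarrow> f xs = g xs) \<Longrightarrow> PRf n g"
  unfolding PRf_def by metis

lemma PRf_list:
  assumes "\<forall>g\<in>set gs. PRf n g"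
  shows "\<exists>gs'. length gs' = length gs \<and> (\<forall>g\<in>set gs'. PR n g) \<and>
     (\<forall>xs. length xs = n \<longrightarrow> map (\<lambda>g. g xs) gs' = map (\<lambda>g. g xs) gs)"
  using assms
proof (induction gs)
  case Nil then show ?case by auto
next
  case (Cons g gs)
  then obtain gs' where gs': "length gs' = length gs" "\<forall>g\<in>set gs'. PR n g"
     "\<forall>xs. length xs = n \<longrightarrow> map (\<lambda>g. g xs) gs' = map (\<lambda>g. g xs) gs" by auto
  from Cons.prems obtain g' where "PR n g'" "\<forall>xs. length xs = n \<longrightarrow> g' xs = g xs"
    unfolding PRf_def by auto
  then show ?case using gs' by (intro exI[of _ "g'#gs'"]) auto
qed

lemma PRf_comp:
  assumes "PRf m f" "length gs = m" "\<forall>g\<in>set gs. PRf n g"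
  shows "PRf n (\<lambda>xs. f (map (\<lambda>g. g xs) gs))"
proof -
  obtain f' where f': "PR m f'" "\<forall>xs. length xs = m \<longrightarrow> f' xs = f xs"
    using assms(1) unfolding PRf_def by auto
  obtain gs' where gs': "length gs' = length gs" "\<forall>g\<in>set gs'. PR n g"
     "\<forall>xs. length xs = n \<longrightarrow> map (\<lambda>g. g xs) gs' = map (\<lambda>g. g xs) gs"
    using PRf_list[OF assms(3)] by auto
  have "PR n (\<lambda>xs. f' (map (\<lambda>g. g xs) gs'))"
    using f'(1) gs' assms(2) by (intro PR.comp) auto
  moreover have "f' (map (\<lambda>g. g xs) gs') = f (map (\<lambda>g. g xs) gs)" if "length xs = n" for xs
    using that gs' f' assms(2) by simp
  ultimately show ?thesis unfolding PRf_def by blast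
qed

lemma PRf_rec:
  assumes A: "PRf n A" and B: "PRf (Suc (Suc n)) B" and C: "PRf n C"
  shows "PRf n (\<lambda>xs. rec_nat (A xs) (\<lambda>y r. B (y # r # xs)) (C xs))"
proof -
  obtain fA where fA: "PR n fA" "\<forall>xs. length xs = n \<longrightarrow> fA xs = A xs"
    using A unfolding PRf_def by auto
  obtain fB where fB: "PR (Suc (Suc n)) fB" "\<forall>xs. length xs = Suc (Suc n) \<longrightarrow> fB xs = B xs"
    using B unfolding PRf_def by auto
  define H where "H = (\<lambda>xs. rec_nat (fA (tl xs)) (\<lambda>y r. fB (y # r # tl xs)) (hd xs))"
  have "PR (Suc n) H" unfolding H_def using fA fB by (intro PR.prim_rec)
  hence H: "PRf (Suc n) H" by (rule PR_PRf)
  have gs: "\<forall>g\<in>set (C # map (\<lambda>j ys. ys ! j) [0..<n]). PRf n g"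
    using C by (auto intro!: PR_PRf intro: PR.proj)
  have "PRf n (\<lambda>xs. H (map (\<lambda>g. g xs) (C # map (\<lambda>j ys. ys ! j) [0..<n])))"
    by (rule PRf_comp[OF H _ gs]) simp
  moreover have "H (map (\<lambda>g. g xs) (C # map (\<lambda>j ys. ys ! j) [0..<n])) =
      rec_nat (A xs) (\<lambda>y r. B (y # r # xs)) (C xs)" if "length xs = n" for xs
  proof -
    have m: "map (\<lambda>g. g xs) (map (\<lambda>j ys. ys ! j) [0..<n]) = xs"
      using that by (simp add: comp_def) (metis map_nth)
    have "(\<lambda>y r. fB (y # r # xs)) = (\<lambda>y r. B (y # r # xs))"
      using fB that by auto
    then show ?thesis using m fA that by (simp add: H_def)
  qed
  ultimately show ?thesis by (rule PRf_cong)
qed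

definition local :: "nat \<Rightarrow> ((nat \<Rightarrow> nat) \<Rightarrow> 'a) \<Rightarrow> bool" where
  "local n g \<longleftrightarrow> (\<forall>e e'. (\<forall>i<n. e i = e' i) \<longrightarrow> g e = g e')"

definition PRe :: "nat \<Rightarrow> ((nat \<Rightarrow> nat) \<Rightarrow> nat) \<Rightarrow> bool" where
  "PRe n g \<longleftrightarrow> local n g \<and> PRf n (\<lambda>xs. g (nth xs))"

lemma PRe_var: "i < n \<Longrightarrow> PRe n (\<lambda>e. e i)"
  unfolding PRe_def local_def using PR_PRf[OF PR.proj] by simp

lemma PRe_zero: "PRe n (\<lambda>e. 0)"
  unfolding PRe_def local_def using PR_PRf[OF PR.zero] by simp

lemma PRe_subst:
  assumes g: "PRe m g" and s: "\<And>i. i < m \<Longrightarrow> PRe n (s i)"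
  shows "PRe n (\<lambda>e. g (\<lambda>i. s i e))"
proof -
  have lg: "local m g" and pg: "PRf m (\<lambda>xs. g (nth xs))" using g unfolding PRe_def by auto
  have ls: "local n (s i)" and ps: "PRf n (\<lambda>xs. s i (nth xs))" if "i < m" for i
    using s[OF that] unfolding PRe_def by auto
  have "PRf n (\<lambda>xs. (\<lambda>xs. g (nth xs)) (map (\<lambda>g. g xs) (map (\<lambda>i xs. s i (nth xs)) [0..<m])))"
    using pg ps by (intro PRf_comp) auto
  moreover have "(\<lambda>xs. g (nth xs)) (map (\<lambda>g. g xs) (map (\<lambda>i xs. s i (nth xs)) [0..<m]))
      = g (\<lambda>i. s i (nth xs))" for xs
    by (rule lg[unfolded local_def, rule_format]) simp
  ultimately have "PRf n (\<lambda>xs. g (\<lambda>i. s i (nth xs)))" by simp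
  moreover have "local n (\<lambda>e. g (\<lambda>i. s i e))"
    unfolding local_def
  proof (intro allI impI)
    fix e e' :: "nat \<Rightarrow> nat" assume "\<forall>i<n. e i = e' i"
    hence H: "\<forall>i<m. s i e = s i e'" using ls unfolding local_def by simp
    show "g (\<lambda>i. s i e) = g (\<lambda>i. s i e')" by (rule lg[unfolded local_def, rule_format]) (simp add: H)
  qed
  ultimately show ?thesis unfolding PRe_def by simp
qed

lemma PRe_Suc: assumes "PRe n a" shows "PRe n (\<lambda>e. Suc (a e))"
proof -
  have "PRf (Suc 0) (\<lambda>xs. Suc (xs ! 0))"
    by (rule PRf_cong[OF PR_PRf[OF PR.succ[simplified]]]) (case_tac xs; auto)
  moreover have "local (Suc 0) (\<lambda>e. Suc (e 0))" unfolding local_def by auto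
  ultimately have "PRe (Suc 0) (\<lambda>e. Suc (e 0))" unfolding PRe_def by simp
  from PRe_subst[OF this, where s="\<lambda>i. a"] assms show ?thesis by simp
qed

lemma PRe_const: "PRe n (\<lambda>e. c)"
  by (induction c) (simp_all add: PRe_zero PRe_Suc)

lemma PRe_rec:
  assumes "PRe n A" "PRe (Suc (Suc n)) (\<lambda>e. G (e 0) (e 1) (\<lambda>j. e (Suc (Suc j))))" "PRe n C"
  shows "PRe n (\<lambda>e. rec_nat (A e) (\<lambda>y r. G y r e) (C e))"
proof -
  have "PRf n (\<lambda>xs. rec_nat (A (nth xs)) (\<lambda>y r. (\<lambda>ys. G (ys!0) (ys!1) (\<lambda>j. ys ! Suc (Suc j))) (y # r # xs)) (C (nth xs)))"
    using assms unfolding PRe_def by (intro PRf_rec) auto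
  moreover have "(\<lambda>j. (y # r # xs) ! Suc (Suc j)) = nth xs" for y r xs
    by auto
  ultimately have 1: "PRf n (\<lambda>xs. rec_nat (A (nth xs)) (\<lambda>y r. G y r (nth xs)) (C (nth xs)))" by simp
  have lA: "local n A" and lC: "local n C" and lG: "local (Suc (Suc n)) (\<lambda>e. G (e 0) (e 1) (\<lambda>j. e (Suc (Suc j))))"
    using assms unfolding PRe_def by auto
  have Gl: "G y r e = G y r e'" if "\<forall>i<n. e i = e' i" for y r e e'
  proof -
    have "(\<lambda>e. G (e 0) (e 1) (\<lambda>j. e (Suc (Suc j)))) (case_nat y (case_nat r e)) =
          (\<lambda>e. G (e 0) (e 1) (\<lambda>j. e (Suc (Suc j)))) (case_nat y (case_nat r e'))"
      by (rule lG[unfolded local_def, rule_format]) (use that in \<open>auto split: nat.split\<close>)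
    thus ?thesis by simp
  qed
  have "local n (\<lambda>e. rec_nat (A e) (\<lambda>y r. G y r e) (C e))"
    unfolding local_def
  proof (intro allI impI)
    fix e e' :: "nat \<Rightarrow> nat" assume h: "\<forall>i<n. e i = e' i"
    have "A e = A e'" using lA h unfolding local_def by simp
    moreover have "C e = C e'" using lC h unfolding local_def by simp
    moreover have "(\<lambda>y r. G y r e) = (\<lambda>y r. G y r e')" using Gl[OF h] by simp
    ultimately show "rec_nat (A e) (\<lambda>y r. G y r e) (C e) = rec_nat (A e') (\<lambda>y r. G y r e') (C e')"
      by simp
  qed
  with 1 show ?thesis unfolding PRe_def by simp
qed

lemma PRe_compf:
  assumes "PRf m f" "length gs = m" "\<forall>g\<in>set gs. PRe n g"
  shows "PRe n (\<lambda>e. f (map (\<lambda>g. g e) gs))"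
proof -
  have "PRf n (\<lambda>xs. f (map (\<lambda>g. g xs) (map (\<lambda>g xs. g (nth xs)) gs)))"
    using assms unfolding PRe_def by (intro PRf_comp) auto
  moreover have "local n (\<lambda>e. f (map (\<lambda>g. g e) gs))"
    unfolding local_def
  proof (intro allI impI)
    fix e e' :: "nat \<Rightarrow> nat" assume h: "\<forall>i<n. e i = e' i"
    have "\<forall>g\<in>set gs. g e = g e'" using assms(3) h unfolding PRe_def local_def by simp
    hence "map (\<lambda>g. g e) gs = map (\<lambda>g. g e') gs" by (simp only: map_eq_conv)
    thus "f (map (\<lambda>g. g e) gs) = f (map (\<lambda>g. g e') gs)" by (rule arg_cong[where f=f])
  qed
  ultimately show ?thesis unfolding PRe_def by (simp add: comp_def)
qed

lemma PRe_comp2: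
  assumes "PRe (Suc (Suc 0)) (\<lambda>e. h (e 0) (e 1))" "PRe n a" "PRe n b"
  shows "PRe n (\<lambda>e. h (a e) (b e))"
proof -
  have "PRf (Suc (Suc 0)) (\<lambda>xs. h (xs ! 0) (xs ! 1))"
    using assms(1) unfolding PRe_def by simp
  hence "PRe n (\<lambda>e. (\<lambda>xs. h (xs ! 0) (xs ! 1)) (map (\<lambda>g. g e) [a, b]))"
    using assms(2,3) by (intro PRe_compf) auto
  thus ?thesis by simp
qed

lemma PRe_add: assumes "PRe n a" "PRe n b" shows "PRe n (\<lambda>e. a e + b e)"
proof -
  have "PRe (Suc (Suc 0)) (\<lambda>e. rec_nat (e 1) (\<lambda>y r. (\<lambda>y r e. Suc r) y r e) (e 0))"
    by (rule PRe_rec; (intro PRe_var PRe_Suc)?; simp)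
  moreover have "rec_nat (b::nat) (\<lambda>y r. Suc r) a = a + b" for a b
    by (induction a) auto
  ultimately have "PRe (Suc (Suc 0)) (\<lambda>e. e 0 + e 1)" by simp
  thus ?thesis using assms by (rule PRe_comp2)
qed

lemma PRe_mult: assumes "PRe n a" "PRe n b" shows "PRe n (\<lambda>e. a e * b e)"
proof -
  have "PRe (Suc (Suc 0)) (\<lambda>e. rec_nat 0 (\<lambda>y r. (\<lambda>y r e. r + e 1) y r e) (e 0))"
    by (rule PRe_rec; (intro PRe_var PRe_add PRe_zero)?; simp)
  moreover have "rec_nat 0 (\<lambda>y r. r + b) a = a * (b::nat)" for a b
    by (induction a) auto
  ultimately have "PRe (Suc (Suc 0)) (\<lambda>e. e 0 * e 1)" by simp
  thus ?thesis using assms by (rule PRe_comp2)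
qed

lemma PRe_pred: assumes "PRe n a" shows "PRe n (\<lambda>e. a e - 1)"
proof -
  have "PRe n (\<lambda>e. rec_nat 0 (\<lambda>y r. (\<lambda>y r e. y) y r e) (a e))"
    using assms by (intro PRe_rec; (intro PRe_var PRe_zero)?; simp)
  moreover have "rec_nat 0 (\<lambda>y r. y) a = a - (1::nat)" for a
    by (cases a) auto
  ultimately show ?thesis by simp
qed

lemma PRe_minus: assumes "PRe n a" "PRe n b" shows "PRe n (\<lambda>e. a e - b e)"
proof -
  have "PRe (Suc (Suc 0)) (\<lambda>e. rec_nat (e 0) (\<lambda>y r. (\<lambda>y r e. r - 1) y r e) (e 1))"
    by (rule PRe_rec; (intro PRe_var PRe_pred)?; simp)
  moreover have "rec_nat a (\<lambda>y r. r - 1) b = a - (b::nat)" for a b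
    by (induction b) auto
  ultimately have "PRe (Suc (Suc 0)) (\<lambda>e. e 0 - e 1)" by simp
  thus ?thesis using assms by (rule PRe_comp2)
qed

lemma PRe_sum:
  assumes F: "PRe (Suc n) (\<lambda>e. F (e 0) (\<lambda>j. e (Suc j)))" and B: "PRe n B"
  shows "PRe n (\<lambda>e. \<Sum>i<B e. F i e)"
proof -
  have "PRe n (\<lambda>e. rec_nat 0 (\<lambda>y r. (\<lambda>y r e. r + F y e) y r e) (B e))"
  proof (rule PRe_rec[OF PRe_zero _ B])
    have "PRe (Suc (Suc n)) (\<lambda>e. (\<lambda>e. F (e 0) (\<lambda>j. e (Suc j))) (\<lambda>i. (\<lambda>i e. if i = 0 then e 0 else e (Suc i)) i e))"
      by (rule PRe_subst[OF F]) (case_tac "i = 0"; simp; rule PRe_var; simp)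
    hence "PRe (Suc (Suc n)) (\<lambda>e. F (e 0) (\<lambda>j. e (Suc (Suc j))))" by simp
    thus "PRe (Suc (Suc n)) (\<lambda>e. e 1 + F (e 0) (\<lambda>j. e (Suc (Suc j))))"
      by (intro PRe_add PRe_var) auto
  qed
  moreover have "rec_nat 0 (\<lambda>y r. r + F y e) b = (\<Sum>i<b. F i e)" for b e
    by (induction b) auto
  ultimately show ?thesis by simp
qed



definition PRP :: "nat \<Rightarrow> ((nat \<Rightarrow> nat) \<Rightarrow> bool) \<Rightarrow> bool" where
  "PRP n P \<longleftrightarrow> PRe n (\<lambda>e. if P e then 1 else 0)"

lemma PRP_eq: assumes "PRe n a" "PRe n b" shows "PRP n (\<lambda>e. a e = b e)"
proof -
  have "PRe n (\<lambda>e. 1 - ((a e - b e) + (b e - a e)))"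
    using assms by (intro PRe_minus PRe_add PRe_const)
  moreover have "(1::nat) - ((x - y) + (y - x)) = (if x = y then 1 else 0)" for x y :: nat
    by auto
  ultimately show ?thesis unfolding PRP_def by simp
qed

lemma PRP_less: assumes "PRe n a" "PRe n b" shows "PRP n (\<lambda>e. a e < b e)"
proof -
  have "PRe n (\<lambda>e. 1 - (Suc (a e) - b e))"
    using assms by (intro PRe_minus PRe_Suc PRe_const)
  moreover have "(1::nat) - (Suc x - y) = (if x < y then 1 else 0)" for x y :: nat
    by auto
  ultimately show ?thesis unfolding PRP_def by simp
qed

lemma PRP_not: assumes "PRP n P" shows "PRP n (\<lambda>e. \<not> P e)"
proof -
  have "PRe n (\<lambda>e. 1 - (if P e then 1 else 0))"
    using assms unfolding PRP_def by (intro PRe_minus PRe_const)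
  moreover have "(\<lambda>e. 1 - (if P e then 1 else 0)) = (\<lambda>e. if \<not> P e then 1 else (0::nat))"
    by auto
  ultimately show ?thesis unfolding PRP_def by simp
qed

lemma PRP_and: assumes "PRP n P" "PRP n Q" shows "PRP n (\<lambda>e. P e \<and> Q e)"
proof -
  have "PRe n (\<lambda>e. (if P e then 1 else 0) * (if Q e then 1 else 0))"
    using assms unfolding PRP_def by (intro PRe_mult)
  moreover have "(\<lambda>e. (if P e then 1 else 0) * (if Q e then 1 else 0)) = (\<lambda>e. if P e \<and> Q e then 1 else (0::nat))"
    by auto
  ultimately show ?thesis unfolding PRP_def by simp
qed

lemma PRP_or: assumes "PRP n P" "PRP n Q" shows "PRP n (\<lambda>e. P e \<or> Q e)"
proof -
  have "PRP n (\<lambda>e. \<not> (\<not> P e \<and> \<not> Q e))"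
    using assms by (intro PRP_not PRP_and)
  thus ?thesis by simp
qed

lemma PRP_imp: assumes "PRP n P" "PRP n Q" shows "PRP n (\<lambda>e. P e \<longrightarrow> Q e)"
proof -
  have "PRP n (\<lambda>e. \<not> P e \<or> Q e)"
    using assms by (intro PRP_not PRP_or)
  thus ?thesis by simp
qed

lemma PRP_ex:
  assumes "PRP (Suc n) (\<lambda>e. P (e 0) (\<lambda>j. e (Suc j)))" "PRe n B"
  shows "PRP n (\<lambda>e. \<exists>i. i < B e \<and> P i e)"
proof -
  have "PRe n (\<lambda>e. 1 - (1 - (\<Sum>i<B e. (\<lambda>i e. if P i e then 1 else 0) i e)))"
    using assms unfolding PRP_def by (intro PRe_minus PRe_const PRe_sum) auto
  moreover have "(1::nat) - (1 - (\<Sum>i<b. if P i e then 1 else 0)) = (if \<exists>i<b. P i e then 1 else 0)" for b e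
  proof (cases "\<exists>i<b. P i e")
    case True
    then obtain i where i: "i < b" "P i e" by auto
    have "(1::nat) \<le> (\<Sum>i<b. if P i e then 1 else 0)"
      using i by (intro order_trans[OF _ member_le_sum[of i]]) auto
    then show ?thesis using True by simp
  next
    case False then show ?thesis by simp
  qed
  ultimately show ?thesis unfolding PRP_def by simp
qed

lemma PRP_all:
  assumes "PRP (Suc n) (\<lambda>e. P (e 0) (\<lambda>j. e (Suc j)))" "PRe n B"
  shows "PRP n (\<lambda>e. \<forall>i. i < B e \<longrightarrow> P i e)"
proof -
  have "PRP n (\<lambda>e. \<not> (\<exists>i. i < B e \<and> \<not> P i e))"
    using assms by (intro PRP_not PRP_ex) 
  thus ?thesis by simp
qed

lemma PRP_True: "PRP n (\<lambda>e. True)"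
  unfolding PRP_def by (simp add: PRe_const)

lemma PRe_if: assumes "PRP n P" "PRe n a" "PRe n b"
  shows "PRe n (\<lambda>e. if P e then a e else b e)"
proof -
  have "PRe n (\<lambda>e. (if P e then 1 else 0) * a e + (1 - (if P e then 1 else 0)) * b e)"
    using assms unfolding PRP_def by (intro PRe_add PRe_mult PRe_minus PRe_const)
  moreover have "(\<lambda>e. (if P e then 1 else 0) * a e + (1 - (if P e then 1 else 0)) * b e) = (\<lambda>e. if P e then a e else b e)"
    by auto
  ultimately show ?thesis by simp
qed

lemma PRe_triangle: assumes "PRe n a" shows "PRe n (\<lambda>e. triangle (a e))"
proof -
  have "PRe n (\<lambda>e. rec_nat 0 (\<lambda>y r. (\<lambda>y r e. r + Suc y) y r e) (a e))"
    using assms by (intro PRe_rec PRe_zero PRe_add PRe_Suc PRe_var) simp_all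
  moreover have "rec_nat 0 (\<lambda>y r. r + Suc y) x = triangle x" for x
    by (induction x) auto
  ultimately show ?thesis by simp
qed

lemma PRe_pe: assumes "PRe n a" "PRe n b" shows "PRe n (\<lambda>e. prod_encode (a e, b e))"
proof -
  have "PRe n (\<lambda>e. triangle (a e + b e) + a e)"
    using assms by (intro PRe_add PRe_triangle)
  thus ?thesis by (simp add: prod_encode_def)
qed

lemma pd_sum:
  "(\<Sum>x<Suc m. \<Sum>y<Suc m. if prod_encode (x, y) = m then x else 0) = fst (prod_decode m)"
  "(\<Sum>x<Suc m. \<Sum>y<Suc m. if prod_encode (x, y) = m then y else 0) = snd (prod_decode m)"
proof -
  obtain x0 y0 where d: "prod_decode m = (x0, y0)" by (cases "prod_decode m")
  hence m: "m = prod_encode (x0, y0)" by (metis prod_decode_inverse)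
  have b: "x0 < Suc m" "y0 < Suc m" using m le_prod_encode_1 le_prod_encode_2
    by (metis le_imp_less_Suc)+
  have c: "(prod_encode (x, y) = m) \<longleftrightarrow> x = x0 \<and> y = y0" for x y
    using m by simp
  have "(\<Sum>x<Suc m. \<Sum>y<Suc m. if prod_encode (x, y) = m then x else 0)
      = (\<Sum>x<Suc m. if x = x0 then (\<Sum>y<Suc m. if y = y0 then x else 0) else 0)"
    unfolding c by (intro sum.cong) auto
  also have "\<dots> = x0" using b by (simp add: sum.delta)
  finally show "(\<Sum>x<Suc m. \<Sum>y<Suc m. if prod_encode (x, y) = m then x else 0) = fst (prod_decode m)"
    using d by simp
  have "(\<Sum>x<Suc m. \<Sum>y<Suc m. if prod_encode (x, y) = m then y else 0)
      = (\<Sum>x<Suc m. if x = x0 then (\<Sum>y<Suc m. if y = y0 then y else 0) else 0)"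
    unfolding c by (intro sum.cong) auto
  also have "\<dots> = y0" using b by (simp add: sum.delta)
  finally show "(\<Sum>x<Suc m. \<Sum>y<Suc m. if prod_encode (x, y) = m then y else 0) = snd (prod_decode m)"
    using d by simp
qed

lemma PRe_pd0:
  "PRe (Suc 0) (\<lambda>e. fst (prod_decode (e 0)))" "PRe (Suc 0) (\<lambda>e. snd (prod_decode (e 0)))"
proof -
  have "PRe (Suc 0) (\<lambda>e. \<Sum>x<Suc (e 0). \<Sum>y<Suc (e 0). if prod_encode (x, y) = e 0 then x else 0)"
    by (intro PRe_sum PRe_if PRP_eq PRe_pe PRe_var PRe_Suc PRe_zero) simp_all
  thus "PRe (Suc 0) (\<lambda>e. fst (prod_decode (e 0)))" by (simp only: pd_sum)
  have "PRe (Suc 0) (\<lambda>e. \<Sum>x<Suc (e 0). \<Sum>y<Suc (e 0). if prod_encode (x, y) = e 0 then y else 0)"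
    by (intro PRe_sum PRe_if PRP_eq PRe_pe PRe_var PRe_Suc PRe_zero) simp_all
  thus "PRe (Suc 0) (\<lambda>e. snd (prod_decode (e 0)))" by (simp only: pd_sum)
qed

lemma PRe_pd:
  assumes "PRe n a"
  shows "PRe n (\<lambda>e. fst (prod_decode (a e)))" "PRe n (\<lambda>e. snd (prod_decode (a e)))"
  using PRe_subst[OF PRe_pd0(1), where s="\<lambda>i. a"] PRe_subst[OF PRe_pd0(2), where s="\<lambda>i. a"] assms
  by simp_all



definition "tlc c = snd (prod_decode (c - 1))"
definition "hdc c = fst (prod_decode (c - 1))"
definition "itl i c = rec_nat c (\<lambda>y r. tlc r) i"
definition "EE c i = hdc (itl i c)"
definition "pA d = fst (prod_decode d)"
definition "pB d = fst (prod_decode (snd (prod_decode d)))"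
definition "pV d = snd (prod_decode (snd (prod_decode d)))"

lemma PRe_tlc: "PRe n a \<Longrightarrow> PRe n (\<lambda>e. tlc (a e))"
  unfolding tlc_def by (intro PRe_pd PRe_pred)
lemma PRe_hdc: "PRe n a \<Longrightarrow> PRe n (\<lambda>e. hdc (a e))"
  unfolding hdc_def by (intro PRe_pd PRe_pred)
lemma PRe_itl: "PRe n a \<Longrightarrow> PRe n b \<Longrightarrow> PRe n (\<lambda>e. itl (a e) (b e))"
proof -
  assume a: "PRe n a" and b: "PRe n b"
  have "PRe n (\<lambda>e. rec_nat (b e) (\<lambda>y r. (\<lambda>y r e. tlc r) y r e) (a e))"
    using a b by (intro PRe_rec PRe_tlc PRe_var) simp_all
  thus ?thesis unfolding itl_def by simp
qed
lemma PRe_EE: "PRe n a \<Longrightarrow> PRe n b \<Longrightarrow> PRe n (\<lambda>e. EE (a e) (b e))"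
  unfolding EE_def by (intro PRe_hdc PRe_itl)
lemma PRe_pA: "PRe n a \<Longrightarrow> PRe n (\<lambda>e. pA (a e))"
  unfolding pA_def by (intro PRe_pd)
lemma PRe_pB: "PRe n a \<Longrightarrow> PRe n (\<lambda>e. pB (a e))"
  unfolding pB_def by (intro PRe_pd)
lemma PRe_pV: "PRe n a \<Longrightarrow> PRe n (\<lambda>e. pV (a e))"
  unfolding pV_def by (intro PRe_pd)

definition keyeq :: "nat \<Rightarrow> nat \<Rightarrow> bool" where
  "keyeq d d' \<longleftrightarrow> pA d = pA d' \<and> pB d = pB d'"

definition cdistinct :: "nat \<Rightarrow> bool" where
  "cdistinct c \<longleftrightarrow> (\<forall>t. t < c \<longrightarrow> (\<forall>t'. t' < t \<longrightarrow> itl t c \<noteq> 0 \<longrightarrow> \<not> keyeq (EE c t') (EE c t)))"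

definition csub :: "nat \<Rightarrow> nat \<Rightarrow> bool" where
  "csub x c \<longleftrightarrow> (\<forall>i. i < x \<longrightarrow> itl i x \<noteq> 0 \<longrightarrow>
      ((\<exists>j. j < i \<and> keyeq (EE x j) (EE x i)) \<or> (\<exists>t. t < c \<and> itl t c \<noteq> 0 \<and> EE c t = EE x i)))"

definition ccov :: "nat \<Rightarrow> nat \<Rightarrow> nat \<Rightarrow> bool" where
  "ccov n c1 c2 \<longleftrightarrow> (\<forall>a. a < n \<longrightarrow> (\<forall>b. b < n \<longrightarrow> (\<exists>t. t < c1 \<and> (\<exists>t2. t2 < c2 \<and>
      itl t c1 \<noteq> 0 \<and> itl t2 c2 \<noteq> 0 \<and> pA (EE c1 t) = a \<and> pB (EE c1 t) = b \<and> EE c1 t = EE c2 t2))))"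

definition cdiff :: "nat \<Rightarrow> nat \<Rightarrow> bool" where
  "cdiff c1 c2 \<longleftrightarrow> (\<exists>t. t < c1 \<and> (\<exists>t2. t2 < c2 \<and>
      itl t c1 \<noteq> 0 \<and> itl t2 c2 \<noteq> 0 \<and> keyeq (EE c1 t) (EE c2 t2) \<and> pV (EE c1 t) \<noteq> pV (EE c2 t2)))"

definition Cond :: "nat \<Rightarrow> nat \<Rightarrow> nat \<Rightarrow> nat \<Rightarrow> bool" where
  "Cond x n c1 c2 \<longleftrightarrow> cdistinct c1 \<and> cdistinct c2 \<and> csub x c1 \<and> ccov n c1 c2 \<and> cdiff c1 c2"

lemmas PR_intros = PRP_and PRP_or PRP_not PRP_imp PRP_all PRP_ex PRP_eq PRP_less
  PRe_EE PRe_itl PRe_pA PRe_pB PRe_pV PRe_pd PRe_var PRe_zero PRe_const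

lemma PRP_Cond: "PRP (Suc (Suc (Suc 0)))
   (\<lambda>e. Cond (e 0) (e 1) (fst (prod_decode (e 2))) (snd (prod_decode (e 2))))"
  unfolding Cond_def cdistinct_def csub_def ccov_def cdiff_def keyeq_def
  by (intro PR_intros; simp)



lemma ld_tlc: "list_decode (tlc d) = tl (list_decode d)"
proof (cases d)
  case 0 then show ?thesis by (simp add: tlc_def prod_decode_def prod_decode_aux.simps)
next
  case (Suc n) then show ?thesis by (simp add: tlc_def split: prod.split)
qed

lemma itl_Suc: "itl (Suc i) c = tlc (itl i c)" by (simp add: itl_def)

lemma ld_itl: "list_decode (itl i c) = drop i (list_decode c)"
  by (induction i) (simp_all add: itl_def ld_tlc drop_Suc tl_drop)

lemma ld_nil: "list_decode d = [] \<longleftrightarrow> d = 0"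
  by (cases d) (auto split: prod.split)

lemma hdc_hd: "d \<noteq> 0 \<Longrightarrow> hdc d = hd (list_decode d)"
  by (cases d) (auto simp: hdc_def split: prod.split)

lemma itl_nz: "itl i c \<noteq> 0 \<longleftrightarrow> i < length (list_decode c)"
proof -
  have "itl i c \<noteq> 0 \<longleftrightarrow> list_decode (itl i c) \<noteq> []" by (simp add: ld_nil)
  also have "\<dots> \<longleftrightarrow> i < length (list_decode c)" by (simp add: ld_itl linorder_not_le)
  finally show ?thesis .
qed

lemma EE_nth: "i < length (list_decode c) \<Longrightarrow> EE c i = list_decode c ! i"
  using itl_nz[of i c] by (simp add: EE_def hdc_hd ld_itl hd_drop_conv_nth)

lemma len_ld: "length (list_decode c) \<le> c"
proof (induction c rule: list_decode.induct)
  case 1 then show ?case by simp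
next
  case (2 n)
  obtain x y where d: "prod_decode n = (x, y)" by (cases "prod_decode n")
  have "y \<le> n" using d le_prod_encode_2 by (metis prod_decode_inverse)
  with 2 d show ?case by simp
qed

lemma all_code: "(\<forall>t. t < c \<longrightarrow> itl t c \<noteq> 0 \<longrightarrow> P t) \<longleftrightarrow> (\<forall>t < length (list_decode c). P t)"
  using len_ld[of c] itl_nz[of _ c] by (meson less_le_trans)

lemma ex_code: "(\<exists>t. t < c \<and> itl t c \<noteq> 0 \<and> P t) \<longleftrightarrow> (\<exists>t < length (list_decode c). P t)"
  using len_ld[of c] itl_nz[of _ c] by (meson less_le_trans)

definition dk :: "nat \<Rightarrow> int \<times> int" where
  "dk d = (int_decode (pA d), int_decode (pB d))"

lemma decode_entry_eq: "decode_entry d = (dk d, pV d)"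
  by (simp add: decode_entry_def dk_def pA_def pB_def pV_def split: prod.split)

lemma keyeq_dk: "keyeq d d' \<longleftrightarrow> dk d = dk d'"
  by (simp add: keyeq_def dk_def int_decode_eq)

lemma entry_rebuild: "d = prod_encode (pA d, prod_encode (pB d, pV d))"
  by (simp add: pA_def pB_def pV_def)

lemma decode_entry_inj: "decode_entry d = decode_entry d' \<longleftrightarrow> d = d'"
proof
  assume "decode_entry d = decode_entry d'"
  hence "pA d = pA d'" "pB d = pB d'" "pV d = pV d'"
    by (auto simp: decode_entry_eq dk_def int_decode_eq)
  thus "d = d'" by (metis entry_rebuild)
qed simp

lemma map_of_first:
  "map_of (map decode_entry l) k = Some v \<longleftrightarrow>
   (\<exists>i<length l. decode_entry (l ! i) = (k, v) \<and> (\<forall>j<i. fst (decode_entry (l ! j)) \<noteq> k))"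
proof (induction l)
  case Nil then show ?case by simp
next
  case (Cons a l)
  show ?case
  proof (cases "fst (decode_entry a) = k")
    case True
    have L: "map_of (map decode_entry (a # l)) k = Some (snd (decode_entry a))"
      using True by (cases "decode_entry a") auto
    have R: "(\<exists>i<length (a#l). decode_entry ((a#l) ! i) = (k, v) \<and> (\<forall>j<i. fst (decode_entry ((a#l) ! j)) \<noteq> k))
        \<longleftrightarrow> decode_entry a = (k, v)"
    proof
      assume "\<exists>i<length (a#l). decode_entry ((a#l) ! i) = (k, v) \<and> (\<forall>j<i. fst (decode_entry ((a#l) ! j)) \<noteq> k)"
      then obtain i where i: "decode_entry ((a#l) ! i) = (k, v)" "\<forall>j<i. fst (decode_entry ((a#l) ! j)) \<noteq> k" by blast
      have "i = 0"
      proof (rule ccontr)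
        assume "i \<noteq> 0"
        hence "fst (decode_entry ((a#l) ! 0)) \<noteq> k" using i(2) by blast
        thus False using True by simp
      qed
      thus "decode_entry a = (k, v)" using i by simp
    next
      assume "decode_entry a = (k, v)"
      thus "\<exists>i<length (a#l). decode_entry ((a#l) ! i) = (k, v) \<and> (\<forall>j<i. fst (decode_entry ((a#l) ! j)) \<noteq> k)"
        by (intro exI[of _ 0]) auto
    qed
    show ?thesis unfolding L R using True by (cases "decode_entry a") auto
  next
    case False
    have "map_of (map decode_entry (a # l)) k = map_of (map decode_entry l) k"
      using False by (cases "decode_entry a") auto
    also have "\<dots> = Some v \<longleftrightarrow> (\<exists>i<length l. decode_entry (l ! i) = (k, v) \<and> (\<forall>j<i. fst (decode_entry (l ! j)) \<noteq> k))"
      by (rule Cons.IH)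
    also have "\<dots> \<longleftrightarrow> (\<exists>i<length (a#l). decode_entry ((a#l) ! i) = (k, v) \<and> (\<forall>j<i. fst (decode_entry ((a#l) ! j)) \<noteq> k))"
    proof
      assume "\<exists>i<length l. decode_entry (l ! i) = (k, v) \<and> (\<forall>j<i. fst (decode_entry (l ! j)) \<noteq> k)"
      then obtain i where i: "i<length l" "decode_entry (l ! i) = (k, v)" "\<forall>j<i. fst (decode_entry (l ! j)) \<noteq> k" by blast
      have "\<forall>j<Suc i. fst (decode_entry ((a#l) ! j)) \<noteq> k"
        using i(3) False by (auto simp: less_Suc_eq_0_disj)
      thus "\<exists>i<length (a#l). decode_entry ((a#l) ! i) = (k, v) \<and> (\<forall>j<i. fst (decode_entry ((a#l) ! j)) \<noteq> k)"
        using i by (intro exI[of _ "Suc i"]) auto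
    next
      assume "\<exists>i<length (a#l). decode_entry ((a#l) ! i) = (k, v) \<and> (\<forall>j<i. fst (decode_entry ((a#l) ! j)) \<noteq> k)"
      then obtain i where i: "i<length (a#l)" "decode_entry ((a#l) ! i) = (k, v)" "\<forall>j<i. fst (decode_entry ((a#l) ! j)) \<noteq> k" by blast
      have "i \<noteq> 0"
      proof
        assume "i = 0" thus False using i(2) False by simp
      qed
      then obtain i' where i': "i = Suc i'" by (cases i) auto
      have "\<forall>j<i'. fst (decode_entry (l ! j)) \<noteq> k" using i(3) i' by auto
      thus "\<exists>i<length l. decode_entry (l ! i) = (k, v) \<and> (\<forall>j<i. fst (decode_entry (l ! j)) \<noteq> k)"
        using i i' by auto
    qed
    finally show ?thesis .
  qed
qed

lemma fst_decode_entry: "fst (decode_entry d) = dk d"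
  by (simp add: decode_entry_eq)

lemma cdistinct_iff: "cdistinct c \<longleftrightarrow> distinct (map dk (list_decode c))"
proof -
  let ?l = "list_decode c"
  have "cdistinct c \<longleftrightarrow> (\<forall>t. t < c \<longrightarrow> itl t c \<noteq> 0 \<longrightarrow> (\<forall>t'<t. \<not> keyeq (EE c t') (EE c t)))"
    unfolding cdistinct_def by blast
  also have "\<dots> \<longleftrightarrow> (\<forall>t<length ?l. \<forall>t'<t. \<not> keyeq (EE c t') (EE c t))"
    by (rule all_code)
  also have "\<dots> \<longleftrightarrow> (\<forall>t<length ?l. \<forall>t'<t. dk (?l ! t') \<noteq> dk (?l ! t))"
    by (auto simp: EE_nth keyeq_dk)
  also have "\<dots> \<longleftrightarrow> distinct (map dk ?l)"
    unfolding distinct_conv_nth length_map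
  proof safe
    fix i j assume H: "\<forall>t<length ?l. \<forall>t'<t. dk (?l ! t') \<noteq> dk (?l ! t)"
      and ij: "i < length ?l" "j < length ?l" "i \<noteq> j" "map dk ?l ! i = map dk ?l ! j"
    show False
    proof (cases "i < j")
      case True thus False using H[rule_format, of j i] ij by simp
    next
      case False hence "j < i" using ij(3) by simp
      thus False using H[rule_format, of i j] ij by simp
    qed
  next
    fix t t' assume H: "\<forall>i<length ?l. \<forall>j<length ?l. i \<noteq> j \<longrightarrow> map dk ?l ! i \<noteq> map dk ?l ! j"
      and t: "t < length ?l" "t' < t" "dk (?l ! t') = dk (?l ! t)"
    show False using H[rule_format, of t' t] t by simp
  qed
  finally show ?thesis .
qed

lemma R_distinct:
  assumes "cdistinct c"
  shows "pattern_of_code c k = Some v \<longleftrightarrow> (\<exists>t<length (list_decode c). decode_entry (list_decode c ! t) = (k, v))"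
proof -
  have d: "distinct (map fst (map decode_entry (list_decode c)))"
    using assms by (simp add: cdistinct_iff comp_def fst_decode_entry)
  have "pattern_of_code c k = Some v \<longleftrightarrow> (k, v) \<in> set (map decode_entry (list_decode c))"
    unfolding pattern_of_code_def by (rule map_of_eq_Some_iff[OF d])
  also have "\<dots> \<longleftrightarrow> (\<exists>t<length (map decode_entry (list_decode c)). map decode_entry (list_decode c) ! t = (k, v))"
    by (rule in_set_conv_nth)
  also have "\<dots> \<longleftrightarrow> (\<exists>t<length (list_decode c). decode_entry (list_decode c ! t) = (k, v))"
    by (auto simp: nth_map)
  finally show ?thesis .
qed

lemma R_first:
  "pattern_of_code c k = Some v \<longleftrightarrow> (\<exists>i<length (list_decode c). decode_entry (list_decode c ! i) = (k, v) \<and>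
      (\<forall>j<i. dk (list_decode c ! j) \<noteq> k))"
  unfolding pattern_of_code_def map_of_first fst_decode_entry ..

lemma csub_iff:
  assumes "cdistinct c1"
  shows "csub x c1 \<longleftrightarrow> pattern_of_code x \<subseteq>\<^sub>m pattern_of_code c1"
proof -
  let ?lx = "list_decode x" and ?l1 = "list_decode c1"
  have "csub x c1 \<longleftrightarrow> (\<forall>i<length ?lx. (\<exists>j. j < i \<and> keyeq (EE x j) (EE x i)) \<or>
        (\<exists>t<length ?l1. EE c1 t = EE x i))"
    unfolding csub_def all_code[symmetric] ex_code by blast
  also have "\<dots> \<longleftrightarrow> (\<forall>i<length ?lx. (\<exists>j<i. dk (?lx ! j) = dk (?lx ! i)) \<or>
        (\<exists>t<length ?l1. ?l1 ! t = ?lx ! i))"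
    by (intro all_cong1 imp_cong refl) (auto simp: EE_nth keyeq_dk)
  also have "\<dots> \<longleftrightarrow> pattern_of_code x \<subseteq>\<^sub>m pattern_of_code c1"
  proof
    assume H: "\<forall>i<length ?lx. (\<exists>j<i. dk (?lx ! j) = dk (?lx ! i)) \<or> (\<exists>t<length ?l1. ?l1 ! t = ?lx ! i)"
    show "pattern_of_code x \<subseteq>\<^sub>m pattern_of_code c1"
      unfolding map_le_def
    proof
      fix k assume "k \<in> dom (pattern_of_code x)"
      then obtain v where v: "pattern_of_code x k = Some v" by auto
      then obtain i where i: "i < length ?lx" "decode_entry (?lx ! i) = (k, v)" "\<forall>j<i. dk (?lx ! j) \<noteq> k"
        unfolding R_first by blast
      have "dk (?lx ! i) = k" using i(2) by (simp add: decode_entry_eq)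
      hence "\<not> (\<exists>j<i. dk (?lx ! j) = dk (?lx ! i))" using i(3) by auto
      then obtain t where "t < length ?l1" "?l1 ! t = ?lx ! i" using H i(1) by blast
      hence "pattern_of_code c1 k = Some v" using i(2) R_distinct[OF assms] by metis
      thus "pattern_of_code x k = pattern_of_code c1 k" using v by simp
    qed
  next
    assume H: "pattern_of_code x \<subseteq>\<^sub>m pattern_of_code c1"
    show "\<forall>i<length ?lx. (\<exists>j<i. dk (?lx ! j) = dk (?lx ! i)) \<or> (\<exists>t<length ?l1. ?l1 ! t = ?lx ! i)"
    proof (intro allI impI)
      fix i assume i: "i < length ?lx"
      show "(\<exists>j<i. dk (?lx ! j) = dk (?lx ! i)) \<or> (\<exists>t<length ?l1. ?l1 ! t = ?lx ! i)"
      proof (cases "\<exists>j<i. dk (?lx ! j) = dk (?lx ! i)")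
        case False
        obtain k v where kv: "decode_entry (?lx ! i) = (k, v)" by (cases "decode_entry (?lx ! i)")
        have "dk (?lx ! i) = k" using kv by (simp add: decode_entry_eq)
        hence "pattern_of_code x k = Some v" unfolding R_first using i kv False by auto
        hence "pattern_of_code c1 k = Some v" using H unfolding map_le_def by (metis domI)
        then obtain t where "t < length ?l1" "decode_entry (?l1 ! t) = (k, v)"
          using R_distinct[OF assms] by blast
        hence "?l1 ! t = ?lx ! i" using kv decode_entry_inj by metis
        thus ?thesis using \<open>t < length ?l1\<close> by blast
      qed simp
    qed
  qed
  finally show ?thesis .
qed

lemma ex2_code: "(\<exists>t. t < c1 \<and> (\<exists>t2. t2 < c2 \<and> itl t c1 \<noteq> 0 \<and> itl t2 c2 \<noteq> 0 \<and> Q t t2)) \<longleftrightarrow>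
   (\<exists>t<length (list_decode c1). \<exists>t2<length (list_decode c2). Q t t2)"
  using len_ld[of c1] len_ld[of c2] itl_nz[of _ c1] itl_nz[of _ c2] by (meson less_le_trans)

lemma ccov_iff:
  assumes d1: "cdistinct c1" and d2: "cdistinct c2"
  shows "ccov n c1 c2 \<longleftrightarrow> (\<forall>a<n. \<forall>b<n. \<exists>v. pattern_of_code c1 (int_decode a, int_decode b) = Some v \<and>
       pattern_of_code c2 (int_decode a, int_decode b) = Some v)"
proof -
  let ?l1 = "list_decode c1" and ?l2 = "list_decode c2"
  have "ccov n c1 c2 \<longleftrightarrow> (\<forall>a<n. \<forall>b<n. \<exists>t<length ?l1. \<exists>t2<length ?l2.
      pA (?l1 ! t) = a \<and> pB (?l1 ! t) = b \<and> ?l1 ! t = ?l2 ! t2)"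
    unfolding ccov_def ex2_code by (simp add: EE_nth cong: conj_cong)
  also have "\<dots> \<longleftrightarrow> (\<forall>a<n. \<forall>b<n. \<exists>v. pattern_of_code c1 (int_decode a, int_decode b) = Some v \<and>
       pattern_of_code c2 (int_decode a, int_decode b) = Some v)"
  proof (intro all_cong1 imp_cong refl)
    fix a b
    let ?k = "(int_decode a, int_decode b)"
    show "(\<exists>t<length ?l1. \<exists>t2<length ?l2. pA (?l1 ! t) = a \<and> pB (?l1 ! t) = b \<and> ?l1 ! t = ?l2 ! t2) \<longleftrightarrow>
      (\<exists>v. pattern_of_code c1 ?k = Some v \<and> pattern_of_code c2 ?k = Some v)"
    proof
      assume "\<exists>t<length ?l1. \<exists>t2<length ?l2. pA (?l1 ! t) = a \<and> pB (?l1 ! t) = b \<and> ?l1 ! t = ?l2 ! t2"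
      then obtain t t2 where t: "t < length ?l1" "t2 < length ?l2" "pA (?l1 ! t) = a" "pB (?l1 ! t) = b" "?l1 ! t = ?l2 ! t2"
        by blast
      have e: "decode_entry (?l1 ! t) = (?k, pV (?l1 ! t))" using t by (simp add: decode_entry_eq dk_def)
      hence "pattern_of_code c1 ?k = Some (pV (?l1 ! t))" using R_distinct[OF d1] t by blast
      moreover have "pattern_of_code c2 ?k = Some (pV (?l1 ! t))" using R_distinct[OF d2] t e by metis
      ultimately show "\<exists>v. pattern_of_code c1 ?k = Some v \<and> pattern_of_code c2 ?k = Some v" by blast
    next
      assume "\<exists>v. pattern_of_code c1 ?k = Some v \<and> pattern_of_code c2 ?k = Some v"
      then obtain v where v: "pattern_of_code c1 ?k = Some v" "pattern_of_code c2 ?k = Some v" by blast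
      obtain t where t: "t < length ?l1" "decode_entry (?l1 ! t) = (?k, v)" using v(1) R_distinct[OF d1] by blast
      obtain t2 where t2: "t2 < length ?l2" "decode_entry (?l2 ! t2) = (?k, v)" using v(2) R_distinct[OF d2] by blast
      have "pA (?l1 ! t) = a" "pB (?l1 ! t) = b" using t(2) by (auto simp: decode_entry_eq dk_def int_decode_eq)
      moreover have "?l1 ! t = ?l2 ! t2" using t(2) t2(2) decode_entry_inj by metis
      ultimately show "\<exists>t<length ?l1. \<exists>t2<length ?l2. pA (?l1 ! t) = a \<and> pB (?l1 ! t) = b \<and> ?l1 ! t = ?l2 ! t2"
        using t t2 by blast
    qed
  qed
  finally show ?thesis .
qed

lemma cdiff_iff:
  assumes d1: "cdistinct c1" and d2: "cdistinct c2"
  shows "cdiff c1 c2 \<longleftrightarrow> (\<exists>k v1 v2. pattern_of_code c1 k = Some v1 \<and> pattern_of_code c2 k = Some v2 \<and> v1 \<noteq> v2)"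
proof -
  let ?l1 = "list_decode c1" and ?l2 = "list_decode c2"
  have "cdiff c1 c2 \<longleftrightarrow> (\<exists>t<length ?l1. \<exists>t2<length ?l2.
      dk (?l1 ! t) = dk (?l2 ! t2) \<and> pV (?l1 ! t) \<noteq> pV (?l2 ! t2))"
    unfolding cdiff_def ex2_code by (simp add: EE_nth keyeq_dk cong: conj_cong)
  also have "\<dots> \<longleftrightarrow> (\<exists>k v1 v2. pattern_of_code c1 k = Some v1 \<and> pattern_of_code c2 k = Some v2 \<and> v1 \<noteq> v2)"
  proof
    assume "\<exists>t<length ?l1. \<exists>t2<length ?l2. dk (?l1 ! t) = dk (?l2 ! t2) \<and> pV (?l1 ! t) \<noteq> pV (?l2 ! t2)"
    then obtain t t2 where t: "t < length ?l1" "t2 < length ?l2" "dk (?l1 ! t) = dk (?l2 ! t2)" "pV (?l1 ! t) \<noteq> pV (?l2 ! t2)"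
      by blast
    have "pattern_of_code c1 (dk (?l1 ! t)) = Some (pV (?l1 ! t))"
      using R_distinct[OF d1] t by (metis decode_entry_eq)
    moreover have "pattern_of_code c2 (dk (?l1 ! t)) = Some (pV (?l2 ! t2))"
      using R_distinct[OF d2] t by (metis decode_entry_eq)
    ultimately show "\<exists>k v1 v2. pattern_of_code c1 k = Some v1 \<and> pattern_of_code c2 k = Some v2 \<and> v1 \<noteq> v2"
      using t by blast
  next
    assume "\<exists>k v1 v2. pattern_of_code c1 k = Some v1 \<and> pattern_of_code c2 k = Some v2 \<and> v1 \<noteq> v2"
    then obtain k v1 v2 where v: "pattern_of_code c1 k = Some v1" "pattern_of_code c2 k = Some v2" "v1 \<noteq> v2" by blast
    obtain t where t: "t < length ?l1" "decode_entry (?l1 ! t) = (k, v1)" using v(1) R_distinct[OF d1] by blast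
    obtain t2 where t2: "t2 < length ?l2" "decode_entry (?l2 ! t2) = (k, v2)" using v(2) R_distinct[OF d2] by blast
    show "\<exists>t<length ?l1. \<exists>t2<length ?l2. dk (?l1 ! t) = dk (?l2 ! t2) \<and> pV (?l1 ! t) \<noteq> pV (?l2 ! t2)"
    proof (intro exI conjI)
      show "t < length ?l1" "t2 < length ?l2" by (fact t(1), fact t2(1))
      show "dk (?l1 ! t) = dk (?l2 ! t2)" "pV (?l1 ! t) \<noteq> pV (?l2 ! t2)"
        using t(2) t2(2) v(3) by (auto simp: decode_entry_eq)
    qed
  qed
  finally show ?thesis .
qed

definition ee :: "int \<times> int \<Rightarrow> nat \<Rightarrow> nat" where
  "ee p v = prod_encode (int_encode (fst p), prod_encode (int_encode (snd p), v))"

lemma decode_ee: "decode_entry (ee p v) = (p, v)"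
  by (simp add: ee_def decode_entry_def)

lemma code_exists:
  assumes "finite (dom R)"
  shows "\<exists>c. cdistinct c \<and> pattern_of_code c = R"
proof -
  obtain ps where ps: "set ps = dom R" "distinct ps" using finite_distinct_list[OF assms] by blast
  define l where "l = map (\<lambda>p. ee p (the (R p))) ps"
  define c where "c = list_encode l"
  have lc: "list_decode c = l" by (simp add: c_def)
  have me: "map decode_entry l = map (\<lambda>p. (p, the (R p))) ps"
    by (simp add: l_def decode_ee)
  have dke: "dk (ee p v) = p" for p v using decode_ee[of p v] by (simp add: decode_entry_eq)
  have "distinct (map dk l)" using ps(2) by (simp add: l_def comp_def dke)
  hence d: "cdistinct c" by (simp add: cdistinct_iff lc)
  have "map_of (map (\<lambda>p. (p, the (R p))) ps) = R"
  proof
    fix k show "map_of (map (\<lambda>p. (p, the (R p))) ps) k = R k"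
    proof (cases "k \<in> dom R")
      case True
      then obtain v where v: "R k = Some v" by auto
      have "distinct (map fst (map (\<lambda>p. (p, the (R p))) ps))" using ps(2) by (simp add: comp_def)
      moreover have "(k, v) \<in> set (map (\<lambda>p. (p, the (R p))) ps)" using True ps(1) v by auto
      ultimately show ?thesis using v by (simp add: map_of_eq_Some_iff)
    next
      case False
      hence "map_of (map (\<lambda>p. (p, the (R p))) ps) k = None" using ps(1)
        by (simp add: map_of_eq_None_iff image_image)
      thus ?thesis using False by (simp add: domIff)
    qed
  qed
  hence "pattern_of_code c = R" by (simp add: pattern_of_code_def lc me)
  with d show ?thesis by blast
qed



definition Dn :: "nat \<Rightarrow> (int \<times> int) set" where
  "Dn n = (\<lambda>(a, b). (int_decode a, int_decode b)) ` ({..<n} \<times> {..<n})"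

lemma finite_Dn: "finite (Dn n)" by (simp add: Dn_def)

lemma Dn_mem: "(int_decode a, int_decode b) \<in> Dn n \<longleftrightarrow> a < n \<and> b < n"
  by (auto simp: Dn_def int_decode_eq)

lemma in_Dn_eventually: "\<exists>N. \<forall>n\<ge>N. p \<in> Dn n"
proof -
  obtain a b where "p = (int_decode a, int_decode b)"
    by (metis int_encode_inverse prod.collapse)
  thus ?thesis by (intro exI[of _ "Suc (max a b)"]) (auto simp: Dn_mem)
qed

lemma Ball_Dn: "(\<forall>k\<in>Dn n. Q k) \<longleftrightarrow> (\<forall>a<n. \<forall>b<n. Q (int_decode a, int_decode b))"
  by (auto simp: Dn_def)

lemma Cond_sem:
  assumes "cdistinct c1" "cdistinct c2"
  shows "Cond x n c1 c2 \<longleftrightarrow> pattern_of_code x \<subseteq>\<^sub>m pattern_of_code c1 \<and>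
     (\<forall>k\<in>Dn n. \<exists>v. pattern_of_code c1 k = Some v \<and> pattern_of_code c2 k = Some v) \<and>
     (\<exists>k v1 v2. pattern_of_code c1 k = Some v1 \<and> pattern_of_code c2 k = Some v2 \<and> v1 \<noteq> v2)"
  using assms unfolding Cond_def
  by (simp add: csub_iff ccov_iff cdiff_iff Ball_Dn)

lemma finite_dom_code: "is_pattern (pattern_of_code c)"
  by (simp add: is_pattern_def pattern_of_code_def finite_dom_map_of)

lemma main_sem:
  assumes X: "subshift S X"
  shows "occurs_in_shift (pattern_of_code x) (derived X) \<longleftrightarrow>
     (\<forall>n. \<exists>c1 c2. Cond x n c1 c2 \<and> pattern_of_code c1 \<in> language X \<and> pattern_of_code c2 \<in> language X)"
    (is "?L \<longleftrightarrow> ?R")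
proof
  let ?P = "pattern_of_code x"
  assume ?L
  then obtain x0 where x0: "x0 \<in> derived X" "occurs_in ?P x0" unfolding occurs_in_shift_def by blast
  then obtain v where v: "\<forall>p\<in>dom ?P. ?P p = Some (x0 (fst p + fst v, snd p + snd v))"
    unfolding occurs_in_def by blast
  have x0X: "x0 \<in> X" and lim: "x0 islimpt X" using x0(1) unfolding derived_def by auto
  let ?tr = "\<lambda>p::int\<times>int. (fst p + fst v, snd p + snd v)"
  show ?R
  proof
    fix n
    define F where "F = ?tr ` Dn n"
    have op: "open {y::config. \<forall>p\<in>F. y p = x0 p}" by (rule cyl_open) (simp add: F_def finite_Dn)
    have "x0 \<in> {y::config. \<forall>p\<in>F. y p = x0 p}" by simp
    from lim[unfolded islimpt_def, rule_format, OF this op]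
    obtain y where y: "y \<in> X" "\<forall>p\<in>F. y p = x0 p" "y \<noteq> x0" by auto
    have "\<exists>q. y q \<noteq> x0 q" using y(3) by (meson ext)
    then obtain q where q: "y q \<noteq> x0 q" by blast
    define q' where "q' = (fst q - fst v, snd q - snd v)"
    have tq: "?tr q' = q" by (simp add: q'_def)
    define E where "E = Dn n \<union> dom ?P \<union> {q'}"
    have fE: "finite E" unfolding E_def using finite_Dn finite_dom_code[of x]
      by (simp add: is_pattern_def)
    define R1 where "R1 = (\<lambda>p. if p \<in> E then Some (x0 (?tr p)) else None)"
    define R2 where "R2 = (\<lambda>p. if p \<in> E then Some (y (?tr p)) else None)"
    have dR1: "dom R1 = E" and dR2: "dom R2 = E" by (auto simp: R1_def R2_def split: if_splits)
    obtain c1 where c1: "cdistinct c1" "pattern_of_code c1 = R1" using code_exists[of R1] fE dR1 by auto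
    obtain c2 where c2: "cdistinct c2" "pattern_of_code c2 = R2" using code_exists[of R2] fE dR2 by auto
    have "Cond x n c1 c2"
      unfolding Cond_sem[OF c1(1) c2(1)] c1(2) c2(2)
    proof (intro conjI)
      show "?P \<subseteq>\<^sub>m R1" unfolding map_le_def R1_def E_def using v by auto
      show "\<forall>k\<in>Dn n. \<exists>va. R1 k = Some va \<and> R2 k = Some va"
        using y(2) unfolding R1_def R2_def E_def F_def by auto
      show "\<exists>k v1 v2. R1 k = Some v1 \<and> R2 k = Some v2 \<and> v1 \<noteq> v2"
        using q tq unfolding R1_def R2_def E_def by (intro exI[of _ q']) auto
    qed
    moreover have "R1 \<in> language X"
      unfolding language_def is_pattern_def occurs_in_shift_def occurs_in_def
      using fE dR1 x0X by (intro CollectI conjI bexI[of _ x0] exI[of _ v]) (auto simp: R1_def)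
    moreover have "R2 \<in> language X"
      unfolding language_def is_pattern_def occurs_in_shift_def occurs_in_def
      using fE dR2 y(1) by (intro CollectI conjI bexI[of _ y] exI[of _ v]) (auto simp: R2_def)
    ultimately show "\<exists>c1 c2. Cond x n c1 c2 \<and> pattern_of_code c1 \<in> language X \<and> pattern_of_code c2 \<in> language X"
      using c1 c2 by blast
  qed
next
  let ?P = "pattern_of_code x"
  assume R: ?R
  have "\<forall>n. \<exists>p. Cond x n (fst p) (snd p) \<and> pattern_of_code (fst p) \<in> language X \<and> pattern_of_code (snd p) \<in> language X"
    using R by auto
  then obtain Cp where Cp: "\<forall>n. Cond x n (fst (Cp n)) (snd (Cp n)) \<and> pattern_of_code (fst (Cp n)) \<in> language X
      \<and> pattern_of_code (snd (Cp n)) \<in> language X"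
    using choice[of "\<lambda>n p. Cond x n (fst p) (snd p) \<and> pattern_of_code (fst p) \<in> language X \<and> pattern_of_code (snd p) \<in> language X"]
    by blast
  define C1 where "C1 n = fst (Cp n)" for n
  define C2 where "C2 n = snd (Cp n)" for n
  have C: "\<And>n. Cond x n (C1 n) (C2 n)" "\<And>n. pattern_of_code (C1 n) \<in> language X"
    "\<And>n. pattern_of_code (C2 n) \<in> language X"
    using Cp by (auto simp: C1_def C2_def)
  have shiftX: "\<And>y w. y \<in> X \<Longrightarrow> shift w y \<in> X" using X unfolding subshift_def by blast
  have getpt: "\<exists>Y. Y \<in> X \<and> (\<forall>p k. pattern_of_code c p = Some k \<longrightarrow> Y p = k)"
    if "pattern_of_code c \<in> language X" for c
  proof -
    from that obtain y w where yw: "y \<in> X" "\<forall>p\<in>dom (pattern_of_code c). pattern_of_code c p = Some (y (fst p + fst w, snd p + snd w))"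
      unfolding language_def occurs_in_shift_def occurs_in_def by blast
    show ?thesis
    proof (intro exI[of _ "shift w y"] conjI)
      show "shift w y \<in> X" using shiftX[OF yw(1)] .
      show "\<forall>p k. pattern_of_code c p = Some k \<longrightarrow> shift w y p = k"
      proof (intro allI impI)
        fix p k assume pk: "pattern_of_code c p = Some k"
        hence "p \<in> dom (pattern_of_code c)" by auto
        hence "pattern_of_code c p = Some (y (fst p + fst w, snd p + snd w))" using yw(2) by blast
        thus "shift w y p = k" using pk by (simp add: shift_def)
      qed
    qed
  qed
  have "\<forall>n. \<exists>Y. Y \<in> X \<and> (\<forall>p k. pattern_of_code (C1 n) p = Some k \<longrightarrow> Y p = k)"
    using getpt C(2) by blast
  then obtain Y where Y0: "\<forall>n. Y n \<in> X \<and> (\<forall>p k. pattern_of_code (C1 n) p = Some k \<longrightarrow> Y n p = k)"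
    using choice[of "\<lambda>n Y. Y \<in> X \<and> (\<forall>p k. pattern_of_code (C1 n) p = Some k \<longrightarrow> Y p = k)"] by blast
  have Y: "\<And>n. Y n \<in> X" "\<And>n p k. pattern_of_code (C1 n) p = Some k \<Longrightarrow> Y n p = k"
    using Y0 by auto
  have "\<forall>n. \<exists>Y. Y \<in> X \<and> (\<forall>p k. pattern_of_code (C2 n) p = Some k \<longrightarrow> Y p = k)"
    using getpt C(3) by blast
  then obtain Z where Z0: "\<forall>n. Z n \<in> X \<and> (\<forall>p k. pattern_of_code (C2 n) p = Some k \<longrightarrow> Z n p = k)"
    using choice[of "\<lambda>n Y. Y \<in> X \<and> (\<forall>p k. pattern_of_code (C2 n) p = Some k \<longrightarrow> Y p = k)"] by blast
  have Z: "\<And>n. Z n \<in> X" "\<And>n p k. pattern_of_code (C2 n) p = Some k \<Longrightarrow> Z n p = k"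
    using Z0 by auto
  have d1: "cdistinct (C1 n)" and d2: "cdistinct (C2 n)" for n
    using C(1)[of n] unfolding Cond_def by auto
  have sub: "?P \<subseteq>\<^sub>m pattern_of_code (C1 n)"
    and cov: "\<forall>k\<in>Dn n. \<exists>v. pattern_of_code (C1 n) k = Some v \<and> pattern_of_code (C2 n) k = Some v"
    and dif: "\<exists>k v1 v2. pattern_of_code (C1 n) k = Some v1 \<and> pattern_of_code (C2 n) k = Some v2 \<and> v1 \<noteq> v2"
    for n using C(1)[of n] unfolding Cond_sem[OF d1 d2] by auto
  have PY: "?P p = Some (Y n p)" if "p \<in> dom ?P" for n p
  proof -
    from that obtain k where k: "?P p = Some k" by auto
    hence "pattern_of_code (C1 n) p = Some k" using sub[of n] that k unfolding map_le_def by auto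
    hence "Y n p = k" by (rule Y(2))
    thus ?thesis using k by simp
  qed
  have YZ: "Y n p = Z n p" if pD: "p \<in> Dn n" for n p
  proof -
    obtain vv where vv: "pattern_of_code (C1 n) p = Some vv" "pattern_of_code (C2 n) p = Some vv"
      using bspec[OF cov[of n] pD] by blast
    show ?thesis using Y(2)[OF vv(1)] Z(2)[OF vv(2)] by simp
  qed
  have YneZ: "Y n \<noteq> Z n" for n
  proof -
    obtain k v1 v2 where kv: "pattern_of_code (C1 n) k = Some v1" "pattern_of_code (C2 n) k = Some v2" "v1 \<noteq> v2"
      using dif[of n] by blast
    have "Y n k \<noteq> Z n k" using Y(2)[OF kv(1)] Z(2)[OF kv(2)] kv(3) by simp
    thus ?thesis by auto
  qed
  have "seq_compact X" by (rule subshift_seq_compact[OF X])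
  hence "\<exists>l\<in>X. \<exists>r. strict_mono r \<and> ((Y \<circ> r) \<longlongrightarrow> l) sequentially"
    unfolding seq_compact_def using Y(1) by (elim allE[of _ Y]) simp
  then obtain l \<sigma> where l: "l \<in> X" "strict_mono \<sigma>" "((Y \<circ> \<sigma>) \<longlongrightarrow> l) sequentially"
    by blast
  have ev: "eventually (\<lambda>j. Y (\<sigma> j) p = l p) sequentially" for p
    using l(3) unfolding tendsto_config_iff comp_def by (cases p) simp
  have Pl: "occurs_in ?P l"
    unfolding occurs_in_def
  proof (intro exI[of _ "(0,0)"] ballI)
    fix p assume p: "p \<in> dom ?P"
    obtain N where "\<forall>j\<ge>N. Y (\<sigma> j) p = l p" using ev[of p] unfolding eventually_sequentially by blast
    hence "Y (\<sigma> N) p = l p" by simp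
    then obtain j where "Y (\<sigma> j) p = l p" by blast
    thus "?P p = Some (l (fst p + fst (0::int, 0::int), snd p + snd (0::int, 0::int)))"
      using PY[OF p, of "\<sigma> j"] by simp
  qed
  define f where "f = (\<lambda>j. if Y (\<sigma> j) \<noteq> l then Y (\<sigma> j) else Z (\<sigma> j))"
  have fX: "f j \<in> X - {l}" for j
    using Y(1) Z(1) YneZ[of "\<sigma> j"] by (auto simp: f_def)
  have "(f \<longlongrightarrow> l) sequentially"
    unfolding tendsto_config_iff
  proof
    fix p
    obtain N where N: "\<forall>n\<ge>N. p \<in> Dn n" using in_Dn_eventually by blast
    have "eventually (\<lambda>j. p \<in> Dn (\<sigma> j)) sequentially"
      unfolding eventually_sequentially
      using N seq_suble[OF l(2)] by (meson order_trans)
    thus "eventually (\<lambda>j. f j p = l p) sequentially"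
      using ev[of p] by eventually_elim (auto simp: f_def YZ)
  qed
  hence "l islimpt X" using fX islimpt_sequential by blast
  hence "l \<in> derived X" using l(1) by (simp add: derived_def)
  thus ?L using Pl unfolding occurs_in_shift_def by blast
qed



lemma alt_quant_cong:
  "(\<And>zs. length zs = length ys + k \<Longrightarrow> take (length ys) zs = ys \<Longrightarrow> R zs = R' zs) \<Longrightarrow>
   alt_quant b k R ys = alt_quant b k R' ys"
proof (induction k arbitrary: b ys)
  case 0
  then show ?case by simp
next
  case (Suc k)
  have IH: "alt_quant b' k R (ys @ [y]) = alt_quant b' k R' (ys @ [y])" for b' y
  proof (rule Suc.IH)
    fix zs assume zs: "length zs = length (ys @ [y]) + k" "take (length (ys @ [y])) zs = ys @ [y]"
    have "take (length ys) zs = ys"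
      using zs(2) by (metis append_eq_conv_conj length_append_singleton take_take le_Suc_eq min_def)
    thus "R zs = R' zs" using zs(1) Suc.prems by simp
  qed
  show ?case by (cases b) (simp_all add: IH)
qed

lemma alt_quant_const:
  "alt_quant b k (\<lambda>zs. C \<and> R zs) ys = (C \<and> alt_quant b k R ys)"
  by (induction k arbitrary: b ys) (simp, case_tac b, auto)

lemma alt_quant_pair:
  assumes "m \<le> length ys"
  shows "alt_quant b k (\<lambda>zs. RA (aA @ map (\<lambda>y. fst (prod_decode y)) (drop m zs)) \<and>
                            RB (aB @ map (\<lambda>y. snd (prod_decode y)) (drop m zs))) ys
       = (alt_quant b k RA (aA @ map (\<lambda>y. fst (prod_decode y)) (drop m ys)) \<and>
          alt_quant b k RB (aB @ map (\<lambda>y. snd (prod_decode y)) (drop m ys)))"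
  using assms
proof (induction k arbitrary: b ys)
  case 0
  then show ?case by simp
next
  case (Suc k)
  let ?A = "\<lambda>y. alt_quant (\<not> b) k RA ((aA @ map (\<lambda>y. fst (prod_decode y)) (drop m ys)) @ [y])"
  let ?B = "\<lambda>y. alt_quant (\<not> b) k RB ((aB @ map (\<lambda>y. snd (prod_decode y)) (drop m ys)) @ [y])"
  have IH: "alt_quant b' k (\<lambda>zs. RA (aA @ map (\<lambda>y. fst (prod_decode y)) (drop m zs)) \<and>
                            RB (aB @ map (\<lambda>y. snd (prod_decode y)) (drop m zs))) (ys @ [y])
     = (alt_quant b' k RA ((aA @ map (\<lambda>y. fst (prod_decode y)) (drop m ys)) @ [fst (prod_decode y)]) \<and>
        alt_quant b' k RB ((aB @ map (\<lambda>y. snd (prod_decode y)) (drop m ys)) @ [snd (prod_decode y)]))" for b' y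
    using Suc.IH[of "ys @ [y]" b'] Suc.prems by simp
  show ?case
  proof (cases b)
    case True
    have "(\<forall>y. ?A (fst (prod_decode y)) \<and> ?B (snd (prod_decode y))) \<longleftrightarrow> (\<forall>y. ?A y) \<and> (\<forall>y. ?B y)"
    proof safe
      fix y assume H: "\<forall>y. ?A (fst (prod_decode y)) \<and> ?B (snd (prod_decode y))"
      show "?A y" using H[rule_format, of "prod_encode (y, 0)"] by simp
      show "?B y" using H[rule_format, of "prod_encode (0, y)"] by simp
    qed auto
    thus ?thesis using True by (simp add: IH)
  next
    case False
    have "(\<exists>y. ?A (fst (prod_decode y)) \<and> ?B (snd (prod_decode y))) \<longleftrightarrow> (\<exists>y. ?A y) \<and> (\<exists>y. ?B y)"
    proof safe
      fix y1 y2 assume "?A y1" "?B y2"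
      thus "\<exists>y. ?A (fst (prod_decode y)) \<and> ?B (snd (prod_decode y))"
        by (intro exI[of _ "prod_encode (y1, y2)"]) simp
    qed auto
    thus ?thesis using False by (simp add: IH)
  qed
qed

lemma PRe_weaken: "PRe m g \<Longrightarrow> m \<le> n \<Longrightarrow> PRe n g"
  using PRe_subst[of m g n "\<lambda>i e. e i"] PRe_var by force

lemma drop3_map: "length zs = k + 3 \<Longrightarrow> map (\<lambda>j. h (zs ! (j + 3))) [0..<k] = map h (drop 3 zs)"
  by (rule nth_equalityI) (auto simp: add.commute)

theorem lemma9:
  fixes S :: "nat set" and X :: "config set" and k :: nat
  assumes "k \<ge> 1"
    and "subshift S X"
    and "Pi0_patterns k (language X)"
  shows "Pi0_patterns (k + 2) {P. is_pattern P \<and> occurs_in_shift P (derived X)}"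
proof -
  from assms(3) obtain f where f: "PR (Suc k) f"
    "\<forall>c. c \<in> {n. pattern_of_code n \<in> language X} \<longleftrightarrow> alt_quant True k (\<lambda>ys. f ys \<noteq> 0) [c]"
    unfolding Pi0_patterns_def Pi0_def by blast
  have L: "pattern_of_code c \<in> language X \<longleftrightarrow> alt_quant True k (\<lambda>ys. f ys \<noteq> 0) [c]" for c
    using f(2) by auto
  define G1 where "G1 = (\<lambda>e::nat\<Rightarrow>nat. fst (prod_decode (e 2))) # map (\<lambda>j e. fst (prod_decode (e (j + 3)))) [0..<k]"
  define G2 where "G2 = (\<lambda>e::nat\<Rightarrow>nat. snd (prod_decode (e 2))) # map (\<lambda>j e. snd (prod_decode (e (j + 3)))) [0..<k]"
  define M where "M e = (if Cond (e 0) (e 1) (fst (prod_decode (e 2))) (snd (prod_decode (e 2))) then 1 else 0)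
      * f (map (\<lambda>g. g e) G1) * f (map (\<lambda>g. g e) G2)" for e
  have PC: "PRe (Suc (Suc (Suc k))) (\<lambda>e. if Cond (e 0) (e 1) (fst (prod_decode (e 2))) (snd (prod_decode (e 2))) then 1 else 0)"
    by (rule PRe_weaken[OF PRP_Cond[unfolded PRP_def]]) simp
  have PG1: "PRe (Suc (Suc (Suc k))) (\<lambda>e. f (map (\<lambda>g. g e) G1))"
    by (rule PRe_compf[OF PR_PRf[OF f(1)]]) (auto simp: G1_def intro!: PRe_pd PRe_var)
  have PG2: "PRe (Suc (Suc (Suc k))) (\<lambda>e. f (map (\<lambda>g. g e) G2))"
    by (rule PRe_compf[OF PR_PRf[OF f(1)]]) (auto simp: G2_def intro!: PRe_pd PRe_var)
  have "PRe (Suc (Suc (Suc k))) M"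
    unfolding M_def by (intro PRe_mult PC PG1 PG2)
  then obtain g where g: "PR (Suc (Suc (Suc k))) g" "\<forall>xs. length xs = Suc (Suc (Suc k)) \<longrightarrow> g xs = M (nth xs)"
    unfolding PRe_def PRf_def by blast
  have main: "x \<in> {n. pattern_of_code n \<in> {P. is_pattern P \<and> occurs_in_shift P (derived X)}} \<longleftrightarrow>
      alt_quant True (k + 2) (\<lambda>ys. g ys \<noteq> 0) [x]" for x
  proof -
    have "alt_quant True (k + 2) (\<lambda>ys. g ys \<noteq> 0) [x] = alt_quant True (k + 2) (\<lambda>ys. M (nth ys) \<noteq> 0) [x]"
      by (rule alt_quant_cong) (simp add: g(2))
    also have "\<dots> = (\<forall>n. \<exists>w. alt_quant True k (\<lambda>ys. M (nth ys) \<noteq> 0) [x, n, w])"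
      by (simp add: numeral_2_eq_2)
    also have "\<dots> = (\<forall>n. \<exists>w. Cond x n (fst (prod_decode w)) (snd (prod_decode w)) \<and>
        pattern_of_code (fst (prod_decode w)) \<in> language X \<and> pattern_of_code (snd (prod_decode w)) \<in> language X)"
    proof (intro all_cong1 ex_cong1)
      fix n w
      let ?c1 = "fst (prod_decode w)" and ?c2 = "snd (prod_decode w)"
      have "alt_quant True k (\<lambda>ys. M (nth ys) \<noteq> 0) [x, n, w] =
        alt_quant True k (\<lambda>zs. Cond x n ?c1 ?c2 \<and> (f ([?c1] @ map (\<lambda>y. fst (prod_decode y)) (drop 3 zs)) \<noteq> 0 \<and>
             f ([?c2] @ map (\<lambda>y. snd (prod_decode y)) (drop 3 zs)) \<noteq> 0)) [x, n, w]"
      proof (rule alt_quant_cong)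
        fix zs :: "nat list" assume zs: "length zs = length [x, n, w] + k" "take (length [x, n, w]) zs = [x, n, w]"
        have t: "take 3 zs = [x, n, w]" using zs(2) by (simp add: numeral_3_eq_3)
        define r where "r = drop 3 zs"
        have eq: "zs = x # n # w # r" using t append_take_drop_id[of 3 zs] unfolding r_def by simp
        have z: "zs ! 0 = x" "zs ! 1 = n" "zs ! 2 = w" by (simp_all add: eq)
        have l: "length zs = k + 3" using zs(1) by simp
        have "map (\<lambda>g. g (nth zs)) G1 = [?c1] @ map (\<lambda>y. fst (prod_decode y)) (drop 3 zs)"
          using drop3_map[OF l, of "\<lambda>y. fst (prod_decode y)"] z by (simp add: G1_def comp_def)
        moreover have "map (\<lambda>g. g (nth zs)) G2 = [?c2] @ map (\<lambda>y. snd (prod_decode y)) (drop 3 zs)"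
          using drop3_map[OF l, of "\<lambda>y. snd (prod_decode y)"] z by (simp add: G2_def comp_def)
        ultimately show "(M (nth zs) \<noteq> 0) = (Cond x n ?c1 ?c2 \<and> (f ([?c1] @ map (\<lambda>y. fst (prod_decode y)) (drop 3 zs)) \<noteq> 0 \<and>
             f ([?c2] @ map (\<lambda>y. snd (prod_decode y)) (drop 3 zs)) \<noteq> 0))"
          using z by (simp add: M_def)
      qed
      also have "\<dots> = (Cond x n ?c1 ?c2 \<and> (alt_quant True k (\<lambda>ys. f ys \<noteq> 0) ([?c1] @ map (\<lambda>y. fst (prod_decode y)) (drop 3 [x, n, w])) \<and>
             alt_quant True k (\<lambda>ys. f ys \<noteq> 0) ([?c2] @ map (\<lambda>y. snd (prod_decode y)) (drop 3 [x, n, w]))))"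
        unfolding alt_quant_const
        by (subst alt_quant_pair[where RA="\<lambda>ys. f ys \<noteq> 0" and RB="\<lambda>ys. f ys \<noteq> 0"]) simp_all
      also have "\<dots> = (Cond x n ?c1 ?c2 \<and> pattern_of_code ?c1 \<in> language X \<and> pattern_of_code ?c2 \<in> language X)"
        by (simp add: L)
      finally show "alt_quant True k (\<lambda>ys. M (nth ys) \<noteq> 0) [x, n, w] = (Cond x n ?c1 ?c2 \<and>
        pattern_of_code ?c1 \<in> language X \<and> pattern_of_code ?c2 \<in> language X)" .
    qed
    also have "\<dots> = (\<forall>n. \<exists>c1 c2. Cond x n c1 c2 \<and> pattern_of_code c1 \<in> language X \<and> pattern_of_code c2 \<in> language X)"
    proof (intro all_cong1 iffI)
      fix n
      assume "\<exists>w. Cond x n (fst (prod_decode w)) (snd (prod_decode w)) \<and>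
        pattern_of_code (fst (prod_decode w)) \<in> language X \<and> pattern_of_code (snd (prod_decode w)) \<in> language X"
      thus "\<exists>c1 c2. Cond x n c1 c2 \<and> pattern_of_code c1 \<in> language X \<and> pattern_of_code c2 \<in> language X" by blast
    next
      fix n
      assume "\<exists>c1 c2. Cond x n c1 c2 \<and> pattern_of_code c1 \<in> language X \<and> pattern_of_code c2 \<in> language X"
      then obtain c1 c2 where "Cond x n c1 c2 \<and> pattern_of_code c1 \<in> language X \<and> pattern_of_code c2 \<in> language X" by blast
      thus "\<exists>w. Cond x n (fst (prod_decode w)) (snd (prod_decode w)) \<and>
        pattern_of_code (fst (prod_decode w)) \<in> language X \<and> pattern_of_code (snd (prod_decode w)) \<in> language X"
        by (intro exI[of _ "prod_encode (c1, c2)"]) simp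
    qed
    also have "\<dots> = occurs_in_shift (pattern_of_code x) (derived X)"
      using main_sem[OF assms(2)] by simp
    also have "\<dots> = (x \<in> {n. pattern_of_code n \<in> {P. is_pattern P \<and> occurs_in_shift P (derived X)}})"
      using finite_dom_code[of x] by simp
    finally show ?thesis by simp
  qed
  show ?thesis
    unfolding Pi0_patterns_def Pi0_def
    using g(1) main by (intro exI[of _ g]) simp
qed


end
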